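(* Let $R$ be a reduced ring and let $S=\left\{\begin{pmatrix} a&b\\0&a\end{pmatrix} : a,b\in R\right\}$. Then $S$ is almost Armendariz, and the trivial extension $T(S,S)$ is also almost Armendariz.
   Context: All rings are associative with identity. A ring is reduced if it has no nonzero nilpotent elements. For a ring $R$ and an $R$-bimodule $M$, the trivial extension $T(R,M)$ is $R\times M$ with componentwise addition and multiplication $(r_1,m_1)(r_2,m_2)=(r_1r_2, r_1m_2+m_1r_2)$. For a ring $R$, $P(R)$ denotes the prime radical of $R$ (the intersection of all prime ideals of $R$, equivalently the set of strongly nilpotent elements of $R$). A ring $R$ is called almost Armendariz if whenever $f(x)=\sum_{i=0}^m a_ix^i$ and $g(x)=\sum_{j=0}^n b_jx^j\in R[x]$ satisfy $f(x)g(x)=0$, then $a_ib_j\in P(R)$ for all $0\le i\le m$, $0\le j\le n$. *)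

theory Defs
  imports "HOL-Algebra.UnivPoly"
begin

definition reduced_ring :: "('a, 'm) ring_scheme \<Rightarrow> bool" where
  "reduced_ring R \<longleftrightarrow>
     (\<forall>a\<in>carrier R. \<forall>n::nat. a [^]\<^bsub>R\<^esub> n = \<zero>\<^bsub>R\<^esub> \<longrightarrow> a = \<zero>\<^bsub>R\<^esub>)"

definition prime_ideal_nc :: "'a set \<Rightarrow> ('a, 'm) ring_scheme \<Rightarrow> bool" where
  "prime_ideal_nc P R \<longleftrightarrow> ideal P R \<and> P \<noteq> carrier R \<and>
     (\<forall>a\<in>carrier R. \<forall>b\<in>carrier R.
        (\<forall>r\<in>carrier R. a \<otimes>\<^bsub>R\<^esub> r \<otimes>\<^bsub>R\<^esub> b \<in> P) \<longrightarrow> a \<in> P \<or> b \<in> P)"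

(* prime radical: intersection of all prime ideals (= carrier if there are none) *)
definition prime_radical :: "('a, 'm) ring_scheme \<Rightarrow> 'a set" where
  "prime_radical R = carrier R \<inter> \<Inter>{P. prime_ideal_nc P R}"

definition almost_armendariz :: "('a, 'm) ring_scheme \<Rightarrow> bool" where
  "almost_armendariz R \<longleftrightarrow>
     (\<forall>f\<in>carrier (UP R). \<forall>g\<in>carrier (UP R).
        f \<otimes>\<^bsub>UP R\<^esub> g = \<zero>\<^bsub>UP R\<^esub> \<longrightarrow>
        (\<forall>i j. coeff (UP R) f i \<otimes>\<^bsub>R\<^esub> coeff (UP R) g j \<in> prime_radical R))"

(* 2x2 matrices over R, written row-wise as ((a,b),(c,d)) for [[a,b],[c,d]] *)
type_synonym 'a mat2 = "('a \<times> 'a) \<times> ('a \<times> 'a)"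

definition mat2_ring :: "('a, 'm) ring_scheme \<Rightarrow> 'a mat2 ring" where
  "mat2_ring R = \<lparr>
     carrier = {((a,b),(c,d)) | a b c d.
                  a \<in> carrier R \<and> b \<in> carrier R \<and> c \<in> carrier R \<and> d \<in> carrier R},
     mult = (\<lambda>((a,b),(c,d)) ((e,f),(g,h)).
               ((a \<otimes>\<^bsub>R\<^esub> e \<oplus>\<^bsub>R\<^esub> b \<otimes>\<^bsub>R\<^esub> g, a \<otimes>\<^bsub>R\<^esub> f \<oplus>\<^bsub>R\<^esub> b \<otimes>\<^bsub>R\<^esub> h),
                (c \<otimes>\<^bsub>R\<^esub> e \<oplus>\<^bsub>R\<^esub> d \<otimes>\<^bsub>R\<^esub> g, c \<otimes>\<^bsub>R\<^esub> f \<oplus>\<^bsub>R\<^esub> d \<otimes>\<^bsub>R\<^esub> h))),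
     one = ((\<one>\<^bsub>R\<^esub>, \<zero>\<^bsub>R\<^esub>), (\<zero>\<^bsub>R\<^esub>, \<one>\<^bsub>R\<^esub>)),
     zero = ((\<zero>\<^bsub>R\<^esub>, \<zero>\<^bsub>R\<^esub>), (\<zero>\<^bsub>R\<^esub>, \<zero>\<^bsub>R\<^esub>)),
     add = (\<lambda>((a,b),(c,d)) ((e,f),(g,h)).
               ((a \<oplus>\<^bsub>R\<^esub> e, b \<oplus>\<^bsub>R\<^esub> f), (c \<oplus>\<^bsub>R\<^esub> g, d \<oplus>\<^bsub>R\<^esub> h))) \<rparr>"

definition upper_S :: "('a, 'm) ring_scheme \<Rightarrow> 'a mat2 ring" where
  "upper_S R = (mat2_ring R) \<lparr> carrier :=
     {((a,b),(\<zero>\<^bsub>R\<^esub>,a)) | a b. a \<in> carrier R \<and> b \<in> carrier R} \<rparr>"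

(* trivial extension T(R,M) for M = R viewed as an R-bimodule over itself *)
definition triv_ext_self :: "('a, 'm) ring_scheme \<Rightarrow> ('a \<times> 'a) ring" where
  "triv_ext_self R = \<lparr>
     carrier = carrier R \<times> carrier R,
     mult = (\<lambda>(r1,m1) (r2,m2). (r1 \<otimes>\<^bsub>R\<^esub> r2, r1 \<otimes>\<^bsub>R\<^esub> m2 \<oplus>\<^bsub>R\<^esub> m1 \<otimes>\<^bsub>R\<^esub> r2)),
     one = (\<one>\<^bsub>R\<^esub>, \<zero>\<^bsub>R\<^esub>),
     zero = (\<zero>\<^bsub>R\<^esub>, \<zero>\<^bsub>R\<^esub>),
     add = (\<lambda>(r1,m1) (r2,m2). (r1 \<oplus>\<^bsub>R\<^esub> r2, m1 \<oplus>\<^bsub>R\<^esub> m2)) \<rparr>"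

end

theory Submission
  imports Defs
begin

lemma (in ring) red_sq:
  assumes "reduced_ring R" "a \<in> carrier R" "a \<otimes> a = \<zero>"
  shows "a = \<zero>"
proof -
  have "a [^] (2::nat) = \<zero>" using assms by (simp add: numeral_2_eq_2)
  thus ?thesis using assms unfolding reduced_ring_def by blast
qed

lemma (in ring) red_comm0:
  assumes "reduced_ring R" "a \<in> carrier R" "b \<in> carrier R" "a \<otimes> b = \<zero>"
  shows "b \<otimes> a = \<zero>"
proof -
  have "(b \<otimes> a) \<otimes> (b \<otimes> a) = b \<otimes> ((a \<otimes> b) \<otimes> a)" using assms(2,3) by (simp add: m_assoc)
  also have "\<dots> = \<zero>" by (subst assms(4)) (simp add: assms)
  finally have "(b \<otimes> a) \<otimes> (b \<otimes> a) = \<zero>" .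
  moreover have "b \<otimes> a \<in> carrier R" using assms by simp
  ultimately show ?thesis using red_sq[OF assms(1)] by blast
qed

lemma (in ring) red_armendariz:
  fixes A B :: "nat \<Rightarrow> 'a"
  assumes red: "reduced_ring R"
    and A: "\<And>i. A i \<in> carrier R" and B: "\<And>j. B j \<in> carrier R"
    and conv: "\<And>k. (\<Oplus>i\<in>{..k}. A i \<otimes> B (k - i)) = \<zero>"
  shows "A i \<otimes> B j = \<zero>"
proof -
  have main: "\<forall>p\<le>k. A p \<otimes> B (k - p) = \<zero>" for k :: nat
  proof (induction k rule: less_induct)
    case (less k)
    have IH: "A i \<otimes> B j = \<zero>" if "i + j < k" for i j
      proof -
      have "\<forall>p\<le>i + j. A p \<otimes> B (i + j - p) = \<zero>" using less that by blast
      hence "A i \<otimes> B (i + j - i) = \<zero>" by (drule_tac x=i in spec) simp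
      thus ?thesis by simp
    qed
    have IH': "B j \<otimes> A i = \<zero>" if "i + j < k" for i j
      using red_comm0[OF red A B IH[OF that]] .
    show ?case
    proof (intro allI impI)
      fix p assume "p \<le> k"
      thus "A p \<otimes> B (k - p) = \<zero>"
      proof (induction p rule: less_induct)
        case (less p)
        have "\<zero> = (\<Oplus>i\<in>{..k}. A i \<otimes> B (k - i)) \<otimes> A p" using conv A by simp
        also have "\<dots> = (\<Oplus>i\<in>{..k}. A i \<otimes> B (k - i) \<otimes> A p)"
          using finsum_ldistr[of "{..k}" "A p" "\<lambda>i. A i \<otimes> B (k - i)"] A B by (simp add: Pi_def)
        also have "\<dots> = (\<Oplus>i\<in>{..k}. if p = i then A i \<otimes> B (k - i) \<otimes> A i else \<zero>)"
        proof (rule add.finprod_cong')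
          show "{..k} = {..k}" by simp
          show "(\<lambda>i. if p = i then A i \<otimes> B (k - i) \<otimes> A i else \<zero>) \<in> {..k} \<rightarrow> carrier R"
            using A B by auto
          fix i assume i: "i \<in> {..k}"
          show "A i \<otimes> B (k - i) \<otimes> A p = (if p = i then A i \<otimes> B (k - i) \<otimes> A i else \<zero>)"
          proof (cases "i < p")
            case True
            then show ?thesis using less.IH[of i] less.prems A B by auto
          next
            case False
            show ?thesis
            proof (cases "i = p")
              case False
              with \<open>\<not> i < p\<close> have "p + (k - i) < k" using i less.prems by auto
              hence "B (k - i) \<otimes> A p = \<zero>" by (rule IH')
              hence "A i \<otimes> (B (k - i) \<otimes> A p) = \<zero>" using A B by simp
              thus ?thesis using False A B by (simp add: m_assoc)
            qed simp
          qed
        qed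
        also have "\<dots> = A p \<otimes> B (k - p) \<otimes> A p"
          using finsum_singleton[of p "{..k}" "\<lambda>i. A i \<otimes> B (k - i) \<otimes> A i"] less.prems A B by auto
        finally have "A p \<otimes> B (k - p) \<otimes> A p = \<zero>" by simp
        hence "(A p \<otimes> B (k - p)) \<otimes> (A p \<otimes> B (k - p)) = \<zero>"
          using A B by (simp flip: m_assoc)
        moreover have "A p \<otimes> B (k - p) \<in> carrier R" using A B by simp
        ultimately show ?case using red_sq[OF red] by blast
      qed
    qed
  qed
  have "A i \<otimes> B (i + j - i) = \<zero>" using main[of "i + j"] by (drule_tac x=i in spec) simp
  thus ?thesis by simp
qed


lemma upper_S_carrier:
  "x \<in> carrier (upper_S R) \<longleftrightarrow>
     (\<exists>a b. x = ((a,b),(\<zero>\<^bsub>R\<^esub>,a)) \<and> a \<in> carrier R \<and> b \<in> carrier R)"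
  by (auto simp: upper_S_def)

lemma upper_S_ops:
  "((a,b),(c,d)) \<otimes>\<^bsub>upper_S R\<^esub> ((e,f),(g,h)) =
     ((a \<otimes>\<^bsub>R\<^esub> e \<oplus>\<^bsub>R\<^esub> b \<otimes>\<^bsub>R\<^esub> g, a \<otimes>\<^bsub>R\<^esub> f \<oplus>\<^bsub>R\<^esub> b \<otimes>\<^bsub>R\<^esub> h),
      (c \<otimes>\<^bsub>R\<^esub> e \<oplus>\<^bsub>R\<^esub> d \<otimes>\<^bsub>R\<^esub> g, c \<otimes>\<^bsub>R\<^esub> f \<oplus>\<^bsub>R\<^esub> d \<otimes>\<^bsub>R\<^esub> h))"
  "((a,b),(c,d)) \<oplus>\<^bsub>upper_S R\<^esub> ((e,f),(g,h)) =
     ((a \<oplus>\<^bsub>R\<^esub> e, b \<oplus>\<^bsub>R\<^esub> f), (c \<oplus>\<^bsub>R\<^esub> g, d \<oplus>\<^bsub>R\<^esub> h))"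
  "\<one>\<^bsub>upper_S R\<^esub> = ((\<one>\<^bsub>R\<^esub>, \<zero>\<^bsub>R\<^esub>), (\<zero>\<^bsub>R\<^esub>, \<one>\<^bsub>R\<^esub>))"
  "\<zero>\<^bsub>upper_S R\<^esub> = ((\<zero>\<^bsub>R\<^esub>, \<zero>\<^bsub>R\<^esub>), (\<zero>\<^bsub>R\<^esub>, \<zero>\<^bsub>R\<^esub>))"
  by (simp_all add: upper_S_def mat2_ring_def)

lemma (in ring) upper_S_ring: "ring (upper_S R)"
proof -
  let ?S = "upper_S R"
  have el: "\<And>x. x \<in> carrier ?S \<Longrightarrow> (\<exists>a b. x = ((a,b),(\<zero>,a)) \<and> a \<in> carrier R \<and> b \<in> carrier R)"
    by (simp add: upper_S_carrier)
  have mem: "\<And>a b. a \<in> carrier R \<Longrightarrow> b \<in> carrier R \<Longrightarrow> ((a,b),(\<zero>,a)) \<in> carrier ?S"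
    by (auto simp: upper_S_carrier)
  show ?thesis
  proof (rule ringI)
    show "abelian_group ?S"
    proof (rule abelian_groupI)
      fix x y assume "x \<in> carrier ?S" "y \<in> carrier ?S"
      then show "x \<oplus>\<^bsub>?S\<^esub> y \<in> carrier ?S" by (auto dest!: el simp: upper_S_ops intro!: mem)
    next
      show "\<zero>\<^bsub>?S\<^esub> \<in> carrier ?S" by (auto simp: upper_S_ops intro!: mem)
    next
      fix x y z assume "x \<in> carrier ?S" "y \<in> carrier ?S" "z \<in> carrier ?S"
      then show "x \<oplus>\<^bsub>?S\<^esub> y \<oplus>\<^bsub>?S\<^esub> z = x \<oplus>\<^bsub>?S\<^esub> (y \<oplus>\<^bsub>?S\<^esub> z)"
        by (auto dest!: el simp: upper_S_ops a_assoc)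
    next
      fix x y assume "x \<in> carrier ?S" "y \<in> carrier ?S"
      then show "x \<oplus>\<^bsub>?S\<^esub> y = y \<oplus>\<^bsub>?S\<^esub> x" by (auto dest!: el simp: upper_S_ops a_comm)
    next
      fix x assume "x \<in> carrier ?S"
      then show "\<zero>\<^bsub>?S\<^esub> \<oplus>\<^bsub>?S\<^esub> x = x" by (auto dest!: el simp: upper_S_ops)
    next
      fix x assume "x \<in> carrier ?S"
      then obtain a b where x: "x = ((a,b),(\<zero>,a))" "a \<in> carrier R" "b \<in> carrier R" by (auto dest!: el)
      show "\<exists>y\<in>carrier ?S. y \<oplus>\<^bsub>?S\<^esub> x = \<zero>\<^bsub>?S\<^esub>"
        by (rule bexI[of _ "((\<ominus> a, \<ominus> b),(\<zero>, \<ominus> a))"]) (auto simp: x upper_S_ops l_neg intro!: mem)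
    qed
  next
    show "monoid ?S"
    proof (rule monoidI)
      fix x y assume "x \<in> carrier ?S" "y \<in> carrier ?S"
      then show "x \<otimes>\<^bsub>?S\<^esub> y \<in> carrier ?S" by (auto dest!: el simp: upper_S_ops intro!: mem)
    next
      show "\<one>\<^bsub>?S\<^esub> \<in> carrier ?S" by (auto simp: upper_S_ops intro!: mem)
    next
      fix x y z assume "x \<in> carrier ?S" "y \<in> carrier ?S" "z \<in> carrier ?S"
      then show "x \<otimes>\<^bsub>?S\<^esub> y \<otimes>\<^bsub>?S\<^esub> z = x \<otimes>\<^bsub>?S\<^esub> (y \<otimes>\<^bsub>?S\<^esub> z)"
        by (auto dest!: el simp: upper_S_ops m_assoc l_distr r_distr a_ac)
    next
      fix x assume "x \<in> carrier ?S"
      then show "\<one>\<^bsub>?S\<^esub> \<otimes>\<^bsub>?S\<^esub> x = x" by (auto dest!: el simp: upper_S_ops)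
    next
      fix x assume "x \<in> carrier ?S"
      then show "x \<otimes>\<^bsub>?S\<^esub> \<one>\<^bsub>?S\<^esub> = x" by (auto dest!: el simp: upper_S_ops)
    qed
  next
    fix x y z assume "x \<in> carrier ?S" "y \<in> carrier ?S" "z \<in> carrier ?S"
    then show "(x \<oplus>\<^bsub>?S\<^esub> y) \<otimes>\<^bsub>?S\<^esub> z = x \<otimes>\<^bsub>?S\<^esub> z \<oplus>\<^bsub>?S\<^esub> y \<otimes>\<^bsub>?S\<^esub> z"
      by (auto dest!: el simp: upper_S_ops l_distr r_distr a_ac)
  next
    fix x y z assume "x \<in> carrier ?S" "y \<in> carrier ?S" "z \<in> carrier ?S"
    then show "z \<otimes>\<^bsub>?S\<^esub> (x \<oplus>\<^bsub>?S\<^esub> y) = z \<otimes>\<^bsub>?S\<^esub> x \<oplus>\<^bsub>?S\<^esub> z \<otimes>\<^bsub>?S\<^esub> y"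
      by (auto dest!: el simp: upper_S_ops l_distr r_distr a_ac)
  qed
qed


lemma triv_ops:
  "(r1,m1) \<otimes>\<^bsub>triv_ext_self S\<^esub> (r2,m2) =
     (r1 \<otimes>\<^bsub>S\<^esub> r2, r1 \<otimes>\<^bsub>S\<^esub> m2 \<oplus>\<^bsub>S\<^esub> m1 \<otimes>\<^bsub>S\<^esub> r2)"
  "(r1,m1) \<oplus>\<^bsub>triv_ext_self S\<^esub> (r2,m2) = (r1 \<oplus>\<^bsub>S\<^esub> r2, m1 \<oplus>\<^bsub>S\<^esub> m2)"
  "\<one>\<^bsub>triv_ext_self S\<^esub> = (\<one>\<^bsub>S\<^esub>, \<zero>\<^bsub>S\<^esub>)"
  "\<zero>\<^bsub>triv_ext_self S\<^esub> = (\<zero>\<^bsub>S\<^esub>, \<zero>\<^bsub>S\<^esub>)"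
  "carrier (triv_ext_self S) = carrier S \<times> carrier S"
  by (simp_all add: triv_ext_self_def)

lemma (in ring) triv_ring: "ring (triv_ext_self R)"
proof -
  let ?S = "triv_ext_self R"
  show ?thesis
  proof (rule ringI)
    show "abelian_group ?S"
    proof (rule abelian_groupI)
      fix x y assume "x \<in> carrier ?S" "y \<in> carrier ?S"
      then show "x \<oplus>\<^bsub>?S\<^esub> y \<in> carrier ?S" by (auto simp: triv_ops)
    next
      show "\<zero>\<^bsub>?S\<^esub> \<in> carrier ?S" by (auto simp: triv_ops)
    next
      fix x y z assume "x \<in> carrier ?S" "y \<in> carrier ?S" "z \<in> carrier ?S"
      then show "x \<oplus>\<^bsub>?S\<^esub> y \<oplus>\<^bsub>?S\<^esub> z = x \<oplus>\<^bsub>?S\<^esub> (y \<oplus>\<^bsub>?S\<^esub> z)"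
        by (auto simp: triv_ops a_assoc)
    next
      fix x y assume "x \<in> carrier ?S" "y \<in> carrier ?S"
      then show "x \<oplus>\<^bsub>?S\<^esub> y = y \<oplus>\<^bsub>?S\<^esub> x" by (auto simp: triv_ops a_comm)
    next
      fix x assume "x \<in> carrier ?S"
      then show "\<zero>\<^bsub>?S\<^esub> \<oplus>\<^bsub>?S\<^esub> x = x" by (auto simp: triv_ops)
    next
      fix x assume "x \<in> carrier ?S"
      then obtain a b where x: "x = (a,b)" "a \<in> carrier R" "b \<in> carrier R" by (auto simp: triv_ops)
      show "\<exists>y\<in>carrier ?S. y \<oplus>\<^bsub>?S\<^esub> x = \<zero>\<^bsub>?S\<^esub>"
        by (rule bexI[of _ "(\<ominus> a, \<ominus> b)"]) (auto simp: x triv_ops l_neg)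
    qed
  next
    show "monoid ?S"
    proof (rule monoidI)
      fix x y assume "x \<in> carrier ?S" "y \<in> carrier ?S"
      then show "x \<otimes>\<^bsub>?S\<^esub> y \<in> carrier ?S" by (auto simp: triv_ops)
    next
      show "\<one>\<^bsub>?S\<^esub> \<in> carrier ?S" by (auto simp: triv_ops)
    next
      fix x y z assume "x \<in> carrier ?S" "y \<in> carrier ?S" "z \<in> carrier ?S"
      then show "x \<otimes>\<^bsub>?S\<^esub> y \<otimes>\<^bsub>?S\<^esub> z = x \<otimes>\<^bsub>?S\<^esub> (y \<otimes>\<^bsub>?S\<^esub> z)"
        by (auto simp: triv_ops m_assoc l_distr r_distr a_ac)
    next
      fix x assume "x \<in> carrier ?S"
      then show "\<one>\<^bsub>?S\<^esub> \<otimes>\<^bsub>?S\<^esub> x = x" by (auto simp: triv_ops)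
    next
      fix x assume "x \<in> carrier ?S"
      then show "x \<otimes>\<^bsub>?S\<^esub> \<one>\<^bsub>?S\<^esub> = x" by (auto simp: triv_ops)
    qed
  next
    fix x y z assume "x \<in> carrier ?S" "y \<in> carrier ?S" "z \<in> carrier ?S"
    then show "(x \<oplus>\<^bsub>?S\<^esub> y) \<otimes>\<^bsub>?S\<^esub> z = x \<otimes>\<^bsub>?S\<^esub> z \<oplus>\<^bsub>?S\<^esub> y \<otimes>\<^bsub>?S\<^esub> z"
      by (auto simp: triv_ops l_distr r_distr a_ac)
  next
    fix x y z assume "x \<in> carrier ?S" "y \<in> carrier ?S" "z \<in> carrier ?S"
    then show "z \<otimes>\<^bsub>?S\<^esub> (x \<oplus>\<^bsub>?S\<^esub> y) = z \<otimes>\<^bsub>?S\<^esub> x \<oplus>\<^bsub>?S\<^esub> z \<otimes>\<^bsub>?S\<^esub> y"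
      by (auto simp: triv_ops l_distr r_distr a_ac)
  qed
qed

lemma (in ring) hS_hom: "(\<lambda>x. fst (fst x)) \<in> ring_hom (upper_S R) R"
  by (rule ring_hom_memI) (auto simp: upper_S_carrier upper_S_ops)

lemma (in ring) hT_hom: "(\<lambda>x. fst (fst (fst x))) \<in> ring_hom (triv_ext_self (upper_S R)) R"
  by (rule ring_hom_memI) (auto simp: upper_S_carrier upper_S_ops triv_ops)

lemma (in ring) S_ker:
  assumes "k \<in> carrier (upper_S R)" "fst (fst k) = \<zero>"
    "r \<in> carrier (upper_S R)" "r' \<in> carrier (upper_S R)"
  shows "k \<otimes>\<^bsub>upper_S R\<^esub> r \<otimes>\<^bsub>upper_S R\<^esub> k \<otimes>\<^bsub>upper_S R\<^esub> r' \<otimes>\<^bsub>upper_S R\<^esub> k = \<zero>\<^bsub>upper_S R\<^esub>"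
  using assms by (auto simp: upper_S_carrier upper_S_ops)

lemma (in ring) T_ker:
  assumes "k \<in> carrier (triv_ext_self (upper_S R))" "fst (fst (fst k)) = \<zero>"
    "r \<in> carrier (triv_ext_self (upper_S R))" "r' \<in> carrier (triv_ext_self (upper_S R))"
  shows "k \<otimes>\<^bsub>triv_ext_self (upper_S R)\<^esub> r \<otimes>\<^bsub>triv_ext_self (upper_S R)\<^esub> k
     \<otimes>\<^bsub>triv_ext_self (upper_S R)\<^esub> r' \<otimes>\<^bsub>triv_ext_self (upper_S R)\<^esub> k = \<zero>\<^bsub>triv_ext_self (upper_S R)\<^esub>"
  using assms by (auto simp: upper_S_carrier upper_S_ops triv_ops)


lemma general_aa:
  fixes S :: "('b, 'n) ring_scheme" and R :: "('a, 'm) ring_scheme"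
  assumes S: "ring S" and R: "ring R" and red: "reduced_ring R"
    and h: "h \<in> ring_hom S R"
    and ker: "\<And>k r r'. k \<in> carrier S \<Longrightarrow> h k = \<zero>\<^bsub>R\<^esub> \<Longrightarrow> r \<in> carrier S \<Longrightarrow> r' \<in> carrier S \<Longrightarrow>
       k \<otimes>\<^bsub>S\<^esub> r \<otimes>\<^bsub>S\<^esub> k \<otimes>\<^bsub>S\<^esub> r' \<otimes>\<^bsub>S\<^esub> k = \<zero>\<^bsub>S\<^esub>"
  shows "almost_armendariz S"
  unfolding almost_armendariz_def
proof (intro ballI impI allI)
  interpret hr: ring_hom_ring S R h using ring_hom_ringI2[OF S R h] .
  fix f g i j
  assume f: "f \<in> carrier (UP S)" and g: "g \<in> carrier (UP S)"
    and fg: "f \<otimes>\<^bsub>UP S\<^esub> g = \<zero>\<^bsub>UP S\<^esub>"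
  have fc: "\<And>n. f n \<in> carrier S" using f by (auto simp: UP_def up_def)
  have gc: "\<And>n. g n \<in> carrier S" using g by (auto simp: UP_def up_def)
  have cf: "coeff (UP S) f i = f i" using f by (simp add: UP_def)
  have cg: "coeff (UP S) g j = g j" using g by (simp add: UP_def)
  have conv0: "(\<Oplus>\<^bsub>S\<^esub>i\<in>{..k}. f i \<otimes>\<^bsub>S\<^esub> g (k - i)) = \<zero>\<^bsub>S\<^esub>" for k
  proof -
    have "(f \<otimes>\<^bsub>UP S\<^esub> g) k = (\<Oplus>\<^bsub>S\<^esub>i\<in>{..k}. f i \<otimes>\<^bsub>S\<^esub> g (k - i))"
      using f g by (simp add: UP_def)
    moreover have "(\<zero>\<^bsub>UP S\<^esub>) k = \<zero>\<^bsub>S\<^esub>" by (simp add: UP_def)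
    ultimately show ?thesis using fg by simp
  qed
  have conv: "(\<Oplus>\<^bsub>R\<^esub>i\<in>{..k}. h (f i) \<otimes>\<^bsub>R\<^esub> h (g (k - i))) = \<zero>\<^bsub>R\<^esub>" for k
  proof -
    have "h (\<Oplus>\<^bsub>S\<^esub>i\<in>{..k}. f i \<otimes>\<^bsub>S\<^esub> g (k - i)) = (\<Oplus>\<^bsub>R\<^esub>i\<in>{..k}. h (f i \<otimes>\<^bsub>S\<^esub> g (k - i)))"
      using hr.hom_finsum[of "\<lambda>i. f i \<otimes>\<^bsub>S\<^esub> g (k - i)" "{..k}"] fc gc by (simp add: Pi_def comp_def)
    also have "\<dots> = (\<Oplus>\<^bsub>R\<^esub>i\<in>{..k}. h (f i) \<otimes>\<^bsub>R\<^esub> h (g (k - i)))"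
      using fc gc by simp
    finally show ?thesis using conv0[of k] by simp
  qed
  have hfg: "h (f i) \<otimes>\<^bsub>R\<^esub> h (g j) = \<zero>\<^bsub>R\<^esub>"
    using ring.red_armendariz[OF R red, of "\<lambda>i. h (f i)" "\<lambda>j. h (g j)"] conv fc gc by simp
  define x where "x = f i \<otimes>\<^bsub>S\<^esub> g j"
  have xc: "x \<in> carrier S" using fc gc by (simp add: x_def)
  have hx: "h x = \<zero>\<^bsub>R\<^esub>" using hfg fc gc by (simp add: x_def)
  have "x \<in> P" if P: "prime_ideal_nc P S" for P
  proof -
    have id: "ideal P S" and pr: "\<And>a b. a \<in> carrier S \<Longrightarrow> b \<in> carrier S \<Longrightarrow>
        (\<forall>r\<in>carrier S. a \<otimes>\<^bsub>S\<^esub> r \<otimes>\<^bsub>S\<^esub> b \<in> P) \<Longrightarrow> a \<in> P \<or> b \<in> P"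
      using P unfolding prime_ideal_nc_def by blast+
    interpret I: ideal P S by (rule id)
    have y: "x \<otimes>\<^bsub>S\<^esub> r \<otimes>\<^bsub>S\<^esub> x \<in> P" if r: "r \<in> carrier S" for r
    proof -
      have yc: "x \<otimes>\<^bsub>S\<^esub> r \<otimes>\<^bsub>S\<^esub> x \<in> carrier S" using xc r by simp
      have "\<forall>r'\<in>carrier S. (x \<otimes>\<^bsub>S\<^esub> r \<otimes>\<^bsub>S\<^esub> x) \<otimes>\<^bsub>S\<^esub> r' \<otimes>\<^bsub>S\<^esub> x \<in> P"
        using ker[OF xc hx r] I.zero_closed by simp
      hence "x \<otimes>\<^bsub>S\<^esub> r \<otimes>\<^bsub>S\<^esub> x \<in> P \<or> x \<in> P" using pr[OF yc xc] by blast
      moreover have "x \<in> P \<Longrightarrow> x \<otimes>\<^bsub>S\<^esub> r \<otimes>\<^bsub>S\<^esub> x \<in> P"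
        using I.I_r_closed r xc by simp
      ultimately show ?thesis by blast
    qed
    show ?thesis using pr[OF xc xc] y by blast
  qed
  thus "coeff (UP S) f i \<otimes>\<^bsub>S\<^esub> coeff (UP S) g j \<in> prime_radical S"
    unfolding cf cg prime_radical_def using xc by (auto simp: x_def)
qed

theorem corollary2p3:
  fixes R :: "('a, 'm) ring_scheme"
  assumes "ring R" and "reduced_ring R"
  shows "almost_armendariz (upper_S R) \<and> almost_armendariz (triv_ext_self (upper_S R))"
proof
  interpret ring R by fact
  show "almost_armendariz (upper_S R)"
    by (rule general_aa[OF upper_S_ring assms hS_hom S_ker])
  show "almost_armendariz (triv_ext_self (upper_S R))"
    by (rule general_aa[OF ring.triv_ring[OF upper_S_ring] assms hT_hom T_ker])
qed

end
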